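(* In the misspecified setting described in the context (in particular $\rho(A)<1$), the matrix $M=\bar{\mathbb{E}}[y_{t+1}y_t^\top]\,\Sigma_y^{-1}$ (the limit of the single-step least-squares estimate $\hat G_y$, equal to $CA\Sigma_xC^\top\Sigma_y^{-1}$) satisfies $\rho(M)\le 1$.
   Context: Let $A\in\mathbb{R}^{d_x\times d_x}$, $B_w\in\mathbb{R}^{d_x\times d_x}$, $C\in\mathbb{R}^{d_y\times d_x}$, $D_v\in\mathbb{R}^{d_y\times d_y}$ with spectral radius $\rho(A)<1$ and $D_vD_v^\top\succ0$. System: $x_{t+1}=Ax_t+B_ww_t$, $y_t=Cx_t+D_vv_t$, $w_t\sim\mathcal N(0,I_{d_x})$, $v_t\sim\mathcal N(0,I_{d_y})$ i.i.d. and independent, considered in steady state. $\Sigma_x$ and $\Sigma_y$ are the stationary covariances of $x_t$ and $y_t$ ($\Sigma_y\succ0$); $\bar{\mathbb{E}}[f(t)]=\lim_{T\to\infty}\mathbb{E}\frac1T\sum_{t=0}^Tf(t)$; $\rho(\cdot)$ is the spectral radius. *)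

theory Defs
  imports "Jordan_Normal_Form.Spectral_Radius"
begin

definition rho :: "real mat \<Rightarrow> real" where
  "rho A = spectral_radius (map_mat complex_of_real A)"

definition pos_def :: "real mat \<Rightarrow> bool" where
  "pos_def P \<longleftrightarrow> P\<^sup>T = P \<and>
     (\<forall>v \<in> carrier_vec (dim_row P). v \<noteq> 0\<^sub>v (dim_row P) \<longrightarrow> v \<bullet> (P *\<^sub>v v) > 0)"

end

theory Submission
  imports Defs
begin

lemma smult_pow_mat:
  fixes A :: "'a :: comm_ring_1 mat"
  assumes A: "A \<in> carrier_mat n n"
  shows "(a \<cdot>\<^sub>m A) ^\<^sub>m k = (a ^ k) \<cdot>\<^sub>m (A ^\<^sub>m k)"
proof (induct k)
  case 0
  then show ?case using A by (auto intro!: eq_matI)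
next
  case (Suc k)
  have "(a \<cdot>\<^sub>m A) ^\<^sub>m Suc k = ((a ^ k) \<cdot>\<^sub>m (A ^\<^sub>m k)) * (a \<cdot>\<^sub>m A)" using Suc by simp
  also have "\<dots> = (a ^ Suc k) \<cdot>\<^sub>m (A ^\<^sub>m Suc k)"
    using A by (simp add: mult_smult_distrib[of _ n n _ n] mult_smult_assoc_mat[of _ n n _ n] ac_simps, intro eq_matI, auto)
  finally show ?case .
qed

lemma power_decay:
  fixes A :: "real mat"
  assumes A: "A \<in> carrier_mat n n" and n: "0 < n" and rho: "rho A < 1"
  shows "\<exists>c r. 0 < r \<and> r < 1 \<and> (\<forall>k i j. i < n \<longrightarrow> j < n \<longrightarrow> \<bar>(A ^\<^sub>m k) $$ (i,j)\<bar> \<le> c * r ^ k)"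
proof -
  define A1 where "A1 = map_mat complex_of_real A"
  have A1: "A1 \<in> carrier_mat n n" using A unfolding A1_def by auto
  define r0 where "r0 = rho A"
  have r0: "r0 = spectral_radius A1" unfolding r0_def rho_def A1_def ..
  have "r0 \<in> norm ` spectrum A1" using spectral_radius_mem_max(1)[OF A1 n] r0 by simp
  hence r0pos: "r0 \<ge> 0" by auto
  define r where "r = (r0 + 1) / 2"
  have r: "0 < r" "r < 1" "r0 < r" using r0pos rho r0_def r_def by auto
  define A' where "A' = (1/r) \<cdot>\<^sub>m A"
  have A': "A' \<in> carrier_mat n n" using A unfolding A'_def by auto
  define A2 where "A2 = map_mat complex_of_real A'"
  have A2: "A2 \<in> carrier_mat n n" using A' unfolding A2_def by auto
  have A2eq: "A2 = complex_of_real (1/r) \<cdot>\<^sub>m A1"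
    unfolding A2_def A1_def A'_def by (rule eq_matI, auto)
  have sr2: "spectral_radius A2 < 1"
  proof -
    from spectral_radius_mem_max(1)[OF A2 n] obtain mu where
      mu: "mu \<in> spectrum A2" and eq: "spectral_radius A2 = norm mu" by auto
    from mu obtain v where ev: "eigenvector A2 v mu"
      unfolding spectrum_def eigenvalue_def by auto
    hence v: "v \<in> carrier_vec n" "v \<noteq> 0\<^sub>v n" "A2 *\<^sub>v v = mu \<cdot>\<^sub>v v"
      unfolding eigenvector_def using A2 by auto
    have "A2 *\<^sub>v v = complex_of_real (1/r) \<cdot>\<^sub>v (A1 *\<^sub>v v)"
      unfolding A2eq using A1 v(1) by (intro eq_vecI, auto simp: scalar_prod_def sum_distrib_left ac_simps)
    hence "complex_of_real r \<cdot>\<^sub>v (A2 *\<^sub>v v) = A1 *\<^sub>v v"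
      using r(1) by (auto simp: smult_smult_assoc)
    hence "A1 *\<^sub>v v = (complex_of_real r * mu) \<cdot>\<^sub>v v" using v(3) by (auto simp: smult_smult_assoc)
    hence "eigenvector A1 v (complex_of_real r * mu)" unfolding eigenvector_def using v A1 by auto
    hence "norm (complex_of_real r * mu) \<in> norm ` spectrum A1"
      unfolding spectrum_def eigenvalue_def by auto
    from spectral_radius_mem_max(2)[OF A1 n this] r0
    have "r * norm mu \<le> r0" using r by (simp add: norm_mult)
    hence "r * norm mu < r * 1" using r by linarith
    hence "norm mu < 1" using r by (metis mult_less_cancel_left_pos)
    thus ?thesis using eq by simp
  qed
  from spectral_radius_jnf_norm_bound_less_1_upper_triangular[OF A2 sr2]
  obtain c where c: "\<And>k. norm_bound (A2 ^\<^sub>m k) c" by auto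
  have "\<bar>(A ^\<^sub>m k) $$ (i,j)\<bar> \<le> c * r ^ k" if ij: "i < n" "j < n" for k i j
  proof -
    have "A2 ^\<^sub>m k = map_mat complex_of_real (A' ^\<^sub>m k)"
      unfolding A2_def by (rule of_real_hom.mat_hom_pow[OF A', symmetric])
    also have "A' ^\<^sub>m k = ((1/r) ^ k) \<cdot>\<^sub>m (A ^\<^sub>m k)" unfolding A'_def by (rule smult_pow_mat[OF A])
    finally have eq: "A2 ^\<^sub>m k = map_mat complex_of_real (((1/r) ^ k) \<cdot>\<^sub>m (A ^\<^sub>m k))" .
    have "norm ((A2 ^\<^sub>m k) $$ (i,j)) \<le> c" using c[of k] ij A2 unfolding norm_bound_def by auto
    hence "\<bar>(1/r) ^ k * (A ^\<^sub>m k) $$ (i,j)\<bar> \<le> c" unfolding eq using ij A r by (auto simp: norm_mult norm_power norm_divide abs_mult power_abs)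
    hence "\<bar>(A ^\<^sub>m k) $$ (i,j)\<bar> / r ^ k \<le> c" using r by (simp add: abs_mult power_divide)
    thus ?thesis using r by (simp add: divide_le_eq ac_simps)
  qed
  thus ?thesis using r by blast
qed

lemma sp_bound:
  fixes x w :: "real vec"
  assumes x: "x \<in> carrier_vec n" and w: "w \<in> carrier_vec n"
    and bx: "\<And>i. i < n \<Longrightarrow> \<bar>x $ i\<bar> \<le> e" and bw: "\<And>i. i < n \<Longrightarrow> \<bar>w $ i\<bar> \<le> f"
  shows "\<bar>x \<bullet> w\<bar> \<le> real n * e * f"
proof -
  have "\<bar>x \<bullet> w\<bar> = \<bar>\<Sum>i\<in>{0..<n}. x $ i * w $ i\<bar>" using x w by (simp add: scalar_prod_def)
  also have "\<dots> \<le> (\<Sum>i\<in>{0..<n}. \<bar>x $ i * w $ i\<bar>)" by (rule sum_abs)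
  also have "\<dots> \<le> (\<Sum>i\<in>{0..<n}. e * f)"
  proof (rule sum_mono)
    fix i assume i: "i \<in> {0..<n}"
    have "\<bar>x $ i\<bar> * \<bar>w $ i\<bar> \<le> e * f"
      using bx[of i] bw[of i] i by (intro mult_mono, auto)
    thus "\<bar>x $ i * w $ i\<bar> \<le> e * f" by (simp add: abs_mult)
  qed
  also have "\<dots> = real n * e * f" by simp
  finally show ?thesis .
qed

lemma mv_bound:
  fixes M :: "real mat"
  assumes M: "M \<in> carrier_mat n n" and u: "u \<in> carrier_vec n"
    and bM: "\<And>i j. i < n \<Longrightarrow> j < n \<Longrightarrow> \<bar>M $$ (i,j)\<bar> \<le> e"
    and bu: "\<And>j. j < n \<Longrightarrow> \<bar>u $ j\<bar> \<le> b"
    and i: "i < n"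
  shows "\<bar>(M *\<^sub>v u) $ i\<bar> \<le> real n * e * b"
proof -
  have "(M *\<^sub>v u) $ i = row M i \<bullet> u" using M i by simp
  also have "\<bar>\<dots>\<bar> \<le> real n * e * b"
    by (rule sp_bound[of _ n], insert M u bM bu i, auto)
  finally show ?thesis .
qed

lemma entry_le_sum:
  fixes u :: "real vec"
  assumes "u \<in> carrier_vec n" "j < n"
  shows "\<bar>u $ j\<bar> \<le> (\<Sum>i\<in>{0..<n}. \<bar>u $ i\<bar>)"
  by (rule member_le_sum, insert assms, auto)

lemma mat_entry_le_sum:
  fixes X :: "real mat"
  assumes "i < n" "j < n"
  shows "\<bar>X $$ (i,j)\<bar> \<le> (\<Sum>i\<in>{0..<n}. \<Sum>j\<in>{0..<n}. \<bar>X $$ (i,j)\<bar>)"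
proof -
  have "\<bar>X $$ (i,j)\<bar> \<le> (\<Sum>j\<in>{0..<n}. \<bar>X $$ (i,j)\<bar>)"
    by (rule member_le_sum, insert assms, auto)
  also have "\<dots> \<le> (\<Sum>i\<in>{0..<n}. \<Sum>j\<in>{0..<n}. \<bar>X $$ (i,j)\<bar>)"
    by (rule member_le_sum[where f = "\<lambda>i. \<Sum>j\<in>{0..<n}. \<bar>X $$ (i,j)\<bar>"], insert assms, auto intro: sum_nonneg)
  finally show ?thesis .
qed

lemma form_decay_gen:
  fixes A X :: "real mat"
  assumes A: "A \<in> carrier_mat n n" and X: "X \<in> carrier_mat n n"
    and u: "u \<in> carrier_vec n" and v: "v \<in> carrier_vec n"
    and r: "0 < r" "r < 1"
    and bnd: "\<And>k i j. i < n \<Longrightarrow> j < n \<Longrightarrow> \<bar>(A ^\<^sub>m k) $$ (i,j)\<bar> \<le> c * r ^ k"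
  shows "(\<lambda>k. (transpose_mat (A ^\<^sub>m k) *\<^sub>v u) \<bullet> (X *\<^sub>v (transpose_mat (A ^\<^sub>m k) *\<^sub>v v))) \<longlonglongrightarrow> 0"
proof -
  define bu where "bu = (\<Sum>i\<in>{0..<n}. \<bar>u $ i\<bar>)"
  define bv where "bv = (\<Sum>i\<in>{0..<n}. \<bar>v $ i\<bar>)"
  define LX where "LX = (\<Sum>i\<in>{0..<n}. \<Sum>j\<in>{0..<n}. \<bar>X $$ (i,j)\<bar>)"
  define K where "K = real n * (real n * c * bu) * (real n * LX * (real n * c * bv))"
  have B: "\<bar>(transpose_mat (A ^\<^sub>m k) *\<^sub>v u) \<bullet> (X *\<^sub>v (transpose_mat (A ^\<^sub>m k) *\<^sub>v v))\<bar> \<le> K * (r ^ k * r ^ k)" for k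
  proof -
    have T: "transpose_mat (A ^\<^sub>m k) \<in> carrier_mat n n" using A by auto
    have bT: "\<bar>transpose_mat (A ^\<^sub>m k) $$ (i,j)\<bar> \<le> c * r ^ k" if "i < n" "j < n" for i j
      using bnd[of j i k] that A by auto
    have bx: "\<bar>(transpose_mat (A ^\<^sub>m k) *\<^sub>v u) $ i\<bar> \<le> real n * (c * r ^ k) * bu" if "i < n" for i
      by (rule mv_bound[OF T u bT], insert entry_le_sum[OF u] that, auto simp: bu_def)
    have by': "\<bar>(transpose_mat (A ^\<^sub>m k) *\<^sub>v v) $ i\<bar> \<le> real n * (c * r ^ k) * bv" if "i < n" for i
      by (rule mv_bound[OF T v bT], insert entry_le_sum[OF v] that, auto simp: bv_def)
    have y: "transpose_mat (A ^\<^sub>m k) *\<^sub>v v \<in> carrier_vec n" using T v by auto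
    have bXy: "\<bar>(X *\<^sub>v (transpose_mat (A ^\<^sub>m k) *\<^sub>v v)) $ i\<bar> \<le> real n * LX * (real n * (c * r ^ k) * bv)" if "i < n" for i
      by (rule mv_bound[OF X y _ by' that], insert mat_entry_le_sum, auto simp: LX_def)
    have "\<bar>(transpose_mat (A ^\<^sub>m k) *\<^sub>v u) \<bullet> (X *\<^sub>v (transpose_mat (A ^\<^sub>m k) *\<^sub>v v))\<bar>
       \<le> real n * (real n * (c * r ^ k) * bu) * (real n * LX * (real n * (c * r ^ k) * bv))"
      by (rule sp_bound[of _ n], insert T u y X bx bXy, auto)
    also have "\<dots> = K * (r ^ k * r ^ k)" unfolding K_def by (simp add: ac_simps)
    finally show ?thesis .
  qed
  have L: "(\<lambda>k. K * (r ^ k * r ^ k)) \<longlonglongrightarrow> 0"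
  proof -
    have "(\<lambda>k. r ^ k) \<longlonglongrightarrow> 0" using r by (intro LIMSEQ_power_zero, auto)
    hence "(\<lambda>k. r ^ k * r ^ k) \<longlonglongrightarrow> 0 * 0" by (intro tendsto_mult)
    thus ?thesis by (intro tendsto_mult_right_zero, simp)
  qed
  have L2: "(\<lambda>k. - (K * (r ^ k * r ^ k))) \<longlonglongrightarrow> 0"
    using tendsto_minus[OF L] by simp
  show ?thesis
  proof (rule tendsto_sandwich[OF _ _ L2 L])
    show "\<forall>\<^sub>F k in sequentially. - (K * (r ^ k * r ^ k)) \<le> (transpose_mat (A ^\<^sub>m k) *\<^sub>v u) \<bullet> (X *\<^sub>v (transpose_mat (A ^\<^sub>m k) *\<^sub>v v))"
      by (intro always_eventually allI, insert B, unfold abs_le_iff, (erule_tac x=x in meta_allE)?, linarith)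
    show "\<forall>\<^sub>F k in sequentially. (transpose_mat (A ^\<^sub>m k) *\<^sub>v u) \<bullet> (X *\<^sub>v (transpose_mat (A ^\<^sub>m k) *\<^sub>v v)) \<le> K * (r ^ k * r ^ k)"
      by (intro always_eventually allI, insert B, unfold abs_le_iff, (erule_tac x=x in meta_allE)?, linarith)
  qed
qed

lemma re_mult_vec:
  fixes M :: "real mat" and v :: "complex vec"
  assumes M: "M \<in> carrier_mat n m" and v: "v \<in> carrier_vec m"
  shows "map_vec Re (map_mat complex_of_real M *\<^sub>v v) = M *\<^sub>v map_vec Re v"
    and "map_vec Im (map_mat complex_of_real M *\<^sub>v v) = M *\<^sub>v map_vec Im v"
  using M v by (auto intro!: eq_vecI simp: scalar_prod_def Re_sum Im_sum)

lemma re_smult_vec: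
  fixes v :: "complex vec"
  shows "map_vec Re (l \<cdot>\<^sub>v v) = Re l \<cdot>\<^sub>v map_vec Re v + (- Im l) \<cdot>\<^sub>v map_vec Im v"
    and "map_vec Im (l \<cdot>\<^sub>v v) = Im l \<cdot>\<^sub>v map_vec Re v + Re l \<cdot>\<^sub>v map_vec Im v"
  by (auto intro!: eq_vecI)

lemma form_transp:
  fixes X :: "'a :: comm_semiring_0 mat"
  assumes X: "X \<in> carrier_mat n m" and x: "x \<in> carrier_vec n" and w: "w \<in> carrier_vec m"
  shows "x \<bullet> (X *\<^sub>v w) = (X\<^sup>T *\<^sub>v x) \<bullet> w"
  using transpose_vec_mult_scalar[OF X w x] by simp

lemma form_sym:
  fixes S :: "real mat"
  assumes S: "S \<in> carrier_mat n n" "S\<^sup>T = S" and x: "x \<in> carrier_vec n" and y: "y \<in> carrier_vec n"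
  shows "x \<bullet> (S *\<^sub>v y) = y \<bullet> (S *\<^sub>v x)"
proof -
  have "x \<bullet> (S *\<^sub>v y) = (S\<^sup>T *\<^sub>v x) \<bullet> y" by (rule form_transp[OF S(1) x y])
  also have "\<dots> = y \<bullet> (S *\<^sub>v x)" unfolding S(2) by (rule comm_scalar_prod[of _ n], insert S x y, auto)
  finally show ?thesis .
qed

lemma self_sp_nonneg:
  fixes x :: "real vec"
  shows "x \<bullet> x \<ge> 0"
  unfolding scalar_prod_def by (auto intro: sum_nonneg)

lemma gram_form:
  fixes B :: "real mat"
  assumes B: "B \<in> carrier_mat n m" and x: "x \<in> carrier_vec n" and y: "y \<in> carrier_vec n"
  shows "x \<bullet> ((B * B\<^sup>T) *\<^sub>v y) = (B\<^sup>T *\<^sub>v x) \<bullet> (B\<^sup>T *\<^sub>v y)"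
proof -
  have "x \<bullet> ((B * B\<^sup>T) *\<^sub>v y) = x \<bullet> (B *\<^sub>v (B\<^sup>T *\<^sub>v y))"
    using B y by (simp add: assoc_mult_mat_vec[of _ n m _ n])
  also have "\<dots> = (B\<^sup>T *\<^sub>v x) \<bullet> (B\<^sup>T *\<^sub>v y)" by (rule form_transp[OF B x], insert B y, auto)
  finally show ?thesis .
qed

lemma step_form:
  fixes A X Q :: "real mat"
  assumes A: "A \<in> carrier_mat n n" and X: "X \<in> carrier_mat n n" and Q: "Q \<in> carrier_mat n n"
    and eq: "X = A * X * A\<^sup>T + Q"
    and x: "x \<in> carrier_vec n" and y: "y \<in> carrier_vec n"
  shows "x \<bullet> (X *\<^sub>v y) = (A\<^sup>T *\<^sub>v x) \<bullet> (X *\<^sub>v (A\<^sup>T *\<^sub>v y)) + x \<bullet> (Q *\<^sub>v y)"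
proof -
  have "X *\<^sub>v y = (A * X * A\<^sup>T) *\<^sub>v y + Q *\<^sub>v y"
    using A X Q y by (subst eq, intro add_mult_distrib_mat_vec[of _ n n], auto)
  also have "(A * X * A\<^sup>T) *\<^sub>v y = A *\<^sub>v (X *\<^sub>v (A\<^sup>T *\<^sub>v y))"
    using A X y by (simp add: assoc_mult_mat_vec[of _ n n _ n])
  finally have "x \<bullet> (X *\<^sub>v y) = x \<bullet> (A *\<^sub>v (X *\<^sub>v (A\<^sup>T *\<^sub>v y))) + x \<bullet> (Q *\<^sub>v y)"
    using A X Q x y by (simp add: scalar_prod_add_distrib[of _ n])
  also have "x \<bullet> (A *\<^sub>v (X *\<^sub>v (A\<^sup>T *\<^sub>v y))) = (A\<^sup>T *\<^sub>v x) \<bullet> (X *\<^sub>v (A\<^sup>T *\<^sub>v y))"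
    by (rule form_transp[OF A x], insert A X y, auto)
  finally show ?thesis .
qed

lemma transpose_pow_step:
  fixes A :: "real mat"
  assumes A: "A \<in> carrier_mat n n" and u: "u \<in> carrier_vec n"
  shows "(A ^\<^sub>m Suc k)\<^sup>T *\<^sub>v u = A\<^sup>T *\<^sub>v ((A ^\<^sub>m k)\<^sup>T *\<^sub>v u)"
proof -
  have "(A ^\<^sub>m Suc k)\<^sup>T = A\<^sup>T * (A ^\<^sub>m k)\<^sup>T"
    using A by (simp add: transpose_mult[of _ n n _ n])
  thus ?thesis using A u by (simp add: assoc_mult_mat_vec[of _ n n _ n])
qed

lemma expand3:
  fixes S :: "real mat"
  assumes S: "S \<in> carrier_mat n n" "S\<^sup>T = S" and x: "x \<in> carrier_vec n"
    and y: "y \<in> carrier_vec n" and z: "z \<in> carrier_vec n"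
  shows "(x + c \<cdot>\<^sub>v y + d \<cdot>\<^sub>v z) \<bullet> (S *\<^sub>v (x + c \<cdot>\<^sub>v y + d \<cdot>\<^sub>v z))
    = x \<bullet> (S *\<^sub>v x) + c^2 * (y \<bullet> (S *\<^sub>v y)) + d^2 * (z \<bullet> (S *\<^sub>v z))
      + 2 * c * (x \<bullet> (S *\<^sub>v y)) + 2 * d * (x \<bullet> (S *\<^sub>v z)) + 2 * c * d * (y \<bullet> (S *\<^sub>v z))"
proof -
  have s1: "y \<bullet> (S *\<^sub>v x) = x \<bullet> (S *\<^sub>v y)" by (rule form_sym[OF S y x])
  have s2: "z \<bullet> (S *\<^sub>v x) = x \<bullet> (S *\<^sub>v z)" by (rule form_sym[OF S z x])
  have s3: "z \<bullet> (S *\<^sub>v y) = y \<bullet> (S *\<^sub>v z)" by (rule form_sym[OF S z y])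
  have c: "S *\<^sub>v x \<in> carrier_vec n" "S *\<^sub>v y \<in> carrier_vec n" "S *\<^sub>v z \<in> carrier_vec n"
    using S x y z by auto
  have "S *\<^sub>v (x + c \<cdot>\<^sub>v y + d \<cdot>\<^sub>v z) = S *\<^sub>v x + c \<cdot>\<^sub>v (S *\<^sub>v y) + d \<cdot>\<^sub>v (S *\<^sub>v z)"
    using S x y z by (simp add: mult_add_distrib_mat_vec[of _ n n] mult_mat_vec[of _ n n] assoc_add_vec[of _ n])
  hence "(x + c \<cdot>\<^sub>v y + d \<cdot>\<^sub>v z) \<bullet> (S *\<^sub>v (x + c \<cdot>\<^sub>v y + d \<cdot>\<^sub>v z))
     = (x + c \<cdot>\<^sub>v y + d \<cdot>\<^sub>v z) \<bullet> (S *\<^sub>v x + c \<cdot>\<^sub>v (S *\<^sub>v y) + d \<cdot>\<^sub>v (S *\<^sub>v z))" by simp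
  also have "\<dots> = x \<bullet> (S *\<^sub>v x) + c * (x \<bullet> (S *\<^sub>v y)) + d * (x \<bullet> (S *\<^sub>v z))
     + c * (y \<bullet> (S *\<^sub>v x) + c * (y \<bullet> (S *\<^sub>v y)) + d * (y \<bullet> (S *\<^sub>v z)))
     + d * (z \<bullet> (S *\<^sub>v x) + c * (z \<bullet> (S *\<^sub>v y)) + d * (z \<bullet> (S *\<^sub>v z)))"
    using x y z c by (simp add: add_scalar_prod_distrib[of _ n] scalar_prod_add_distrib[of _ n] algebra_simps)
  also have "\<dots> = x \<bullet> (S *\<^sub>v x) + c^2 * (y \<bullet> (S *\<^sub>v y)) + d^2 * (z \<bullet> (S *\<^sub>v z))
      + 2 * c * (x \<bullet> (S *\<^sub>v y)) + 2 * d * (x \<bullet> (S *\<^sub>v z)) + 2 * c * d * (y \<bullet> (S *\<^sub>v z))"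
    unfolding s1 s2 s3 by (simp add: algebra_simps power2_eq_square)
  finally show ?thesis .
qed

lemma lyap_sym_psd:
  fixes A Bw Sx :: "real mat"
  assumes n: "0 < n" and A: "A \<in> carrier_mat n n" and B: "Bw \<in> carrier_mat n n"
    and S: "Sx \<in> carrier_mat n n" and rho: "rho A < 1"
    and eq: "Sx = A * Sx * A\<^sup>T + Bw * Bw\<^sup>T"
  shows "Sx\<^sup>T = Sx" and "\<And>u. u \<in> carrier_vec n \<Longrightarrow> u \<bullet> (Sx *\<^sub>v u) \<ge> 0"
proof -
  from power_decay[OF A n rho] obtain c r where r: "0 < r" "r < 1"
    and bnd: "\<And>k i j. i < n \<Longrightarrow> j < n \<Longrightarrow> \<bar>(A ^\<^sub>m k) $$ (i,j)\<bar> \<le> c * r ^ k" by blast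
  note dec = form_decay_gen[OF A S _ _ r bnd]
  have Q: "Bw * Bw\<^sup>T \<in> carrier_mat n n" using B by auto
  have AT: "A\<^sup>T \<in> carrier_mat n n" using A by auto
  define xs where "xs = (\<lambda>k u. (A ^\<^sub>m k)\<^sup>T *\<^sub>v u)"
  have xs_c: "xs k u \<in> carrier_vec n" if "u \<in> carrier_vec n" for k u
    using that A unfolding xs_def by (intro mult_mat_vec_carrier[of _ n n], auto)
  have xs_S: "xs (Suc k) u = A\<^sup>T *\<^sub>v xs k u" if "u \<in> carrier_vec n" for k u
    unfolding xs_def by (rule transpose_pow_step[OF A that])
  have step: "x \<bullet> (Sx *\<^sub>v y) = (A\<^sup>T *\<^sub>v x) \<bullet> (Sx *\<^sub>v (A\<^sup>T *\<^sub>v y)) + (Bw\<^sup>T *\<^sub>v x) \<bullet> (Bw\<^sup>T *\<^sub>v y)"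
    if "x \<in> carrier_vec n" "y \<in> carrier_vec n" for x y
    using step_form[OF A S Q eq that] unfolding gram_form[OF B that] .
  define g where "g = (\<lambda>x y. x \<bullet> (Sx *\<^sub>v y) - y \<bullet> (Sx *\<^sub>v x))"
  have gstep: "g x y = g (A\<^sup>T *\<^sub>v x) (A\<^sup>T *\<^sub>v y)" if "x \<in> carrier_vec n" "y \<in> carrier_vec n" for x y
  proof -
    have "(Bw\<^sup>T *\<^sub>v x) \<bullet> (Bw\<^sup>T *\<^sub>v y) = (Bw\<^sup>T *\<^sub>v y) \<bullet> (Bw\<^sup>T *\<^sub>v x)"
      by (rule comm_scalar_prod[of _ n], insert B that, auto)
    thus ?thesis unfolding g_def using step[OF that] step[OF that(2,1)] by simp
  qed
  have gk: "g u v = g (xs k u) (xs k v)" if "u \<in> carrier_vec n" "v \<in> carrier_vec n" for u v k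
  proof (induct k)
    case 0 thus ?case using that A unfolding xs_def by simp
  next
    case (Suc k)
    thus ?case using gstep[OF xs_c[OF that(1)] xs_c[OF that(2)]] xs_S that by simp
  qed
  have g0: "g u v = 0" if u: "u \<in> carrier_vec n" and v: "v \<in> carrier_vec n" for u v
  proof -
    have "(\<lambda>k. g (xs k u) (xs k v)) \<longlonglongrightarrow> 0 - 0"
      unfolding g_def xs_def by (intro tendsto_diff dec u v)
    moreover have "(\<lambda>k. g (xs k u) (xs k v)) = (\<lambda>k. g u v)" using gk[OF u v] by simp
    ultimately have "(\<lambda>k. g u v) \<longlonglongrightarrow> 0" by simp
    thus ?thesis using LIMSEQ_const_iff by blast
  qed
  show "Sx\<^sup>T = Sx"
  proof (rule eq_matI)
    fix i j assume ij: "i < dim_row Sx" "j < dim_col Sx"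
    hence ij': "i < n" "j < n" using S by auto
    have "g (unit_vec n j) (unit_vec n i) = 0" by (rule g0, auto)
    moreover have "unit_vec n j \<bullet> (Sx *\<^sub>v unit_vec n i) = Sx $$ (j, i)"
      using S ij' by (simp add: scalar_prod_left_unit)
    moreover have "unit_vec n i \<bullet> (Sx *\<^sub>v unit_vec n j) = Sx $$ (i, j)"
      using S ij' by (simp add: scalar_prod_left_unit)
    ultimately show "Sx\<^sup>T $$ (i, j) = Sx $$ (i, j)" using ij S unfolding g_def by auto
  qed (use S in simp_all)
  fix u :: "real vec" assume u: "u \<in> carrier_vec n"
  define h where "h = (\<lambda>x. x \<bullet> (Sx *\<^sub>v x))"
  have hk: "h (xs k u) \<le> h u" for k
  proof (induct k)
    case 0 thus ?case using u A unfolding xs_def by simp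
  next
    case (Suc k)
    have "h (xs k u) = h (xs (Suc k) u) + (Bw\<^sup>T *\<^sub>v xs k u) \<bullet> (Bw\<^sup>T *\<^sub>v xs k u)"
      unfolding h_def xs_S[OF u] using step[OF xs_c[OF u] xs_c[OF u]] by simp
    moreover have "(Bw\<^sup>T *\<^sub>v xs k u) \<bullet> (Bw\<^sup>T *\<^sub>v xs k u) \<ge> 0" by (rule self_sp_nonneg)
    ultimately show ?case using Suc by simp
  qed
  have lim: "(\<lambda>k. h (xs k u)) \<longlonglongrightarrow> 0" unfolding h_def xs_def by (rule dec[OF u u])
  have "0 \<le> h u" by (rule LIMSEQ_le_const2[OF lim], use hk in auto)
  thus "u \<bullet> (Sx *\<^sub>v u) \<ge> 0" unfolding h_def .
qed

theorem lemma5: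
  fixes dx dy :: nat
    and A Bw Sx :: "real mat" and C :: "real mat" and Dv Sy Syinv :: "real mat"
  assumes "0 < dx" and "0 < dy"
    and "A \<in> carrier_mat dx dx" and "Bw \<in> carrier_mat dx dx"
    and "C \<in> carrier_mat dy dx" and "Dv \<in> carrier_mat dy dy"
    and "rho A < 1"
    and "pos_def (Dv * Dv\<^sup>T)"
    and "Sx \<in> carrier_mat dx dx"
    and "Sx = A * Sx * A\<^sup>T + Bw * Bw\<^sup>T"
    and "Sy = C * Sx * C\<^sup>T + Dv * Dv\<^sup>T"
    and "pos_def Sy"
    and "Syinv \<in> carrier_mat dy dy" and "Sy * Syinv = 1\<^sub>m dy"
  shows "rho (C * A * Sx * C\<^sup>T * Syinv) \<le> 1"
proof -
  note dx = assms(1) and dy = assms(2) and A = assms(3) and B = assms(4) and C = assms(5)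
    and D = assms(6) and rhoA = assms(7) and S = assms(9) and Sxeq = assms(10) and Syeq = assms(11)
    and Sypd = assms(12) and Si = assms(13) and inv = assms(14)
  have Sxsym: "Sx\<^sup>T = Sx" by (rule lyap_sym_psd(1)[OF dx A B S rhoA Sxeq])
  have Sxpsd: "\<And>u. u \<in> carrier_vec dx \<Longrightarrow> u \<bullet> (Sx *\<^sub>v u) \<ge> 0"
    by (rule lyap_sym_psd(2)[OF dx A B S rhoA Sxeq])
  have Sy: "Sy \<in> carrier_mat dy dy" unfolding Syeq using C S D by auto
  have Sysym: "Sy\<^sup>T = Sy" using Sypd unfolding pos_def_def by auto
  have Sypos: "\<And>v. v \<in> carrier_vec dy \<Longrightarrow> v \<noteq> 0\<^sub>v dy \<Longrightarrow> v \<bullet> (Sy *\<^sub>v v) > 0"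
    using Sypd Sy unfolding pos_def_def by auto
  define K where "K = C * A * Sx * C\<^sup>T"
  have K: "K \<in> carrier_mat dy dy" unfolding K_def using C A S by auto
  define M where "M = C * A * Sx * C\<^sup>T * Syinv"
  have MK: "M = K * Syinv" unfolding M_def K_def ..
  have M: "M \<in> carrier_mat dy dy" unfolding MK using K Si by auto
  define Mc where "Mc = map_mat complex_of_real M"
  have Mc: "Mc \<in> carrier_mat dy dy" unfolding Mc_def using M by auto
  from spectral_radius_mem_max(1)[OF Mc dy] obtain lam where
    lam: "lam \<in> spectrum Mc" and rhoM: "rho M = cmod lam"
    unfolding rho_def Mc_def by auto
  from lam obtain v where "eigenvector Mc v lam" unfolding spectrum_def eigenvalue_def by auto
  hence v: "v \<in> carrier_vec dy" "v \<noteq> 0\<^sub>v dy" "Mc *\<^sub>v v = lam \<cdot>\<^sub>v v"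
    unfolding eigenvector_def using Mc by auto
  define al where "al = Re lam"
  define be where "be = Im lam"
  define a' where "a' = map_vec Re v"
  define b' where "b' = map_vec Im v"
  have a'c: "a' \<in> carrier_vec dy" and b'c: "b' \<in> carrier_vec dy" using v unfolding a'_def b'_def by auto
  have Ma: "M *\<^sub>v a' = al \<cdot>\<^sub>v a' + (- be) \<cdot>\<^sub>v b'"
    using arg_cong[OF v(3), of "map_vec Re"] unfolding Mc_def re_mult_vec(1)[OF M v(1)] re_smult_vec
    a'_def b'_def al_def be_def .
  have Mb: "M *\<^sub>v b' = be \<cdot>\<^sub>v a' + al \<cdot>\<^sub>v b'"
    using arg_cong[OF v(3), of "map_vec Im"] unfolding Mc_def re_mult_vec(2)[OF M v(1)] re_smult_vec
    a'_def b'_def al_def be_def .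
  define a where "a = Syinv *\<^sub>v a'"
  define b where "b = Syinv *\<^sub>v b'"
  have ac: "a \<in> carrier_vec dy" and bc: "b \<in> carrier_vec dy" unfolding a_def b_def using Si a'c b'c by auto
  have Sya: "Sy *\<^sub>v a = a'" unfolding a_def
    using assoc_mult_mat_vec[OF Sy Si a'c] inv a'c by simp
  have Syb: "Sy *\<^sub>v b = b'" unfolding b_def
    using assoc_mult_mat_vec[OF Sy Si b'c] inv b'c by simp
  have Ka: "K *\<^sub>v a = al \<cdot>\<^sub>v (Sy *\<^sub>v a) + (- be) \<cdot>\<^sub>v (Sy *\<^sub>v b)"
  proof -
    have "K *\<^sub>v a = M *\<^sub>v a'" unfolding a_def MK using assoc_mult_mat_vec[OF K Si a'c] by simp
    thus ?thesis unfolding Ma Sya Syb .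
  qed
  have Kb: "K *\<^sub>v b = be \<cdot>\<^sub>v (Sy *\<^sub>v a) + al \<cdot>\<^sub>v (Sy *\<^sub>v b)"
  proof -
    have "K *\<^sub>v b = M *\<^sub>v b'" unfolding b_def MK using assoc_mult_mat_vec[OF K Si b'c] by simp
    thus ?thesis unfolding Mb Sya Syb .
  qed
  have ab_nz: "a \<noteq> 0\<^sub>v dy \<or> b \<noteq> 0\<^sub>v dy"
  proof (rule ccontr)
    assume "\<not> ?thesis"
    hence "a = 0\<^sub>v dy" "b = 0\<^sub>v dy" by auto
    hence "a' = 0\<^sub>v dy" "b' = 0\<^sub>v dy" using Sya Syb Sy by auto
    hence "v = 0\<^sub>v dy" using v(1) unfolding a'_def b'_def
      by (intro eq_vecI, auto simp: vec_eq_iff complex_eq_iff)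
    thus False using v(2) by auto
  qed
  have Syge: "x \<bullet> (Sy *\<^sub>v x) \<ge> 0" if "x \<in> carrier_vec dy" for x
    using Sypos[OF that] that by (cases "x = 0\<^sub>v dy", auto simp: scalar_prod_def)
  define s where "s = a \<bullet> (Sy *\<^sub>v a) + b \<bullet> (Sy *\<^sub>v b)"
  have spos: "s > 0" unfolding s_def using ab_nz Sypos[OF ac] Sypos[OF bc] Syge[OF ac] Syge[OF bc] by auto
  have Syab: "b \<bullet> (Sy *\<^sub>v a) = a \<bullet> (Sy *\<^sub>v b)" by (rule form_sym[OF Sy Sysym bc ac])
  have cSa: "Sy *\<^sub>v a \<in> carrier_vec dy" and cSb: "Sy *\<^sub>v b \<in> carrier_vec dy" using Sy ac bc by auto
  have aKa: "a \<bullet> (K *\<^sub>v a) = al * (a \<bullet> (Sy *\<^sub>v a)) - be * (a \<bullet> (Sy *\<^sub>v b))"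
    unfolding Ka using ac cSa cSb by (simp add: scalar_prod_add_distrib[of _ dy])
  have bKb: "b \<bullet> (K *\<^sub>v b) = be * (b \<bullet> (Sy *\<^sub>v a)) + al * (b \<bullet> (Sy *\<^sub>v b))"
    unfolding Kb using bc cSa cSb by (simp add: scalar_prod_add_distrib[of _ dy])
  have aKb: "a \<bullet> (K *\<^sub>v b) = be * (a \<bullet> (Sy *\<^sub>v a)) + al * (a \<bullet> (Sy *\<^sub>v b))"
    unfolding Kb using ac cSa cSb by (simp add: scalar_prod_add_distrib[of _ dy])
  have bKa: "b \<bullet> (K *\<^sub>v a) = al * (b \<bullet> (Sy *\<^sub>v a)) - be * (b \<bullet> (Sy *\<^sub>v b))"
    unfolding Ka using bc cSa cSb by (simp add: scalar_prod_add_distrib[of _ dy])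
  have qre: "a \<bullet> (K *\<^sub>v a) + b \<bullet> (K *\<^sub>v b) = al * s"
    unfolding aKa bKb s_def Syab by (simp add: algebra_simps)
  have qim: "a \<bullet> (K *\<^sub>v b) - b \<bullet> (K *\<^sub>v a) = be * s"
    unfolding aKb bKa s_def Syab by (simp add: algebra_simps)
  have AT: "A\<^sup>T \<in> carrier_mat dx dx" and CT: "C\<^sup>T \<in> carrier_mat dx dy" using A C by auto
  have Kform: "x \<bullet> (K *\<^sub>v y) = (A\<^sup>T *\<^sub>v (C\<^sup>T *\<^sub>v x)) \<bullet> (Sx *\<^sub>v (C\<^sup>T *\<^sub>v y))"
    if x: "x \<in> carrier_vec dy" and y: "y \<in> carrier_vec dy" for x y
  proof -
    have c1: "C\<^sup>T *\<^sub>v y \<in> carrier_vec dx" using CT y by auto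
    have c2: "Sx *\<^sub>v (C\<^sup>T *\<^sub>v y) \<in> carrier_vec dx" using S c1 by auto
    have c3: "A *\<^sub>v (Sx *\<^sub>v (C\<^sup>T *\<^sub>v y)) \<in> carrier_vec dx" using A c2 by auto
    have cx: "C\<^sup>T *\<^sub>v x \<in> carrier_vec dx" using CT x by auto
    have "K *\<^sub>v y = C *\<^sub>v (A *\<^sub>v (Sx *\<^sub>v (C\<^sup>T *\<^sub>v y)))"
    proof -
      have "K *\<^sub>v y = (C * A * Sx) *\<^sub>v (C\<^sup>T *\<^sub>v y)" unfolding K_def
        by (rule assoc_mult_mat_vec[of _ dy dx], insert C A S CT y, auto)
      also have "\<dots> = (C * A) *\<^sub>v (Sx *\<^sub>v (C\<^sup>T *\<^sub>v y))"
        by (rule assoc_mult_mat_vec[of _ dy dx], insert C A S c1, auto)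
      also have "\<dots> = C *\<^sub>v (A *\<^sub>v (Sx *\<^sub>v (C\<^sup>T *\<^sub>v y)))"
        by (rule assoc_mult_mat_vec[of _ dy dx], insert C A c2, auto)
      finally show ?thesis .
    qed
    hence "x \<bullet> (K *\<^sub>v y) = (C\<^sup>T *\<^sub>v x) \<bullet> (A *\<^sub>v (Sx *\<^sub>v (C\<^sup>T *\<^sub>v y)))"
      using form_transp[OF C x c3] by simp
    also have "\<dots> = (A\<^sup>T *\<^sub>v (C\<^sup>T *\<^sub>v x)) \<bullet> (Sx *\<^sub>v (C\<^sup>T *\<^sub>v y))"
      by (rule form_transp[OF A cx c2])
    finally show ?thesis .
  qed
  have Syform: "x \<bullet> (Sy *\<^sub>v x) = (C\<^sup>T *\<^sub>v x) \<bullet> (Sx *\<^sub>v (C\<^sup>T *\<^sub>v x)) + (Dv\<^sup>T *\<^sub>v x) \<bullet> (Dv\<^sup>T *\<^sub>v x)"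
    if x: "x \<in> carrier_vec dy" for x
  proof -
    have c1: "C\<^sup>T *\<^sub>v x \<in> carrier_vec dx" using CT x by auto
    have c2: "Sx *\<^sub>v (C\<^sup>T *\<^sub>v x) \<in> carrier_vec dx" using S c1 by auto
    have "Sy *\<^sub>v x = (C * Sx * C\<^sup>T) *\<^sub>v x + (Dv * Dv\<^sup>T) *\<^sub>v x"
      unfolding Syeq by (rule add_mult_distrib_mat_vec[of _ dy dy], insert C S D x, auto)
    also have "(C * Sx * C\<^sup>T) *\<^sub>v x = C *\<^sub>v (Sx *\<^sub>v (C\<^sup>T *\<^sub>v x))"
    proof -
      have "(C * Sx * C\<^sup>T) *\<^sub>v x = (C * Sx) *\<^sub>v (C\<^sup>T *\<^sub>v x)"
        by (rule assoc_mult_mat_vec[of _ dy dx], insert C S CT x, auto)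
      also have "\<dots> = C *\<^sub>v (Sx *\<^sub>v (C\<^sup>T *\<^sub>v x))"
        by (rule assoc_mult_mat_vec[of _ dy dx], insert C S c1, auto)
      finally show ?thesis .
    qed
    finally have "x \<bullet> (Sy *\<^sub>v x) = x \<bullet> (C *\<^sub>v (Sx *\<^sub>v (C\<^sup>T *\<^sub>v x))) + x \<bullet> ((Dv * Dv\<^sup>T) *\<^sub>v x)"
      using x C c2 D by (simp add: scalar_prod_add_distrib[of _ dy])
    also have "x \<bullet> (C *\<^sub>v (Sx *\<^sub>v (C\<^sup>T *\<^sub>v x))) = (C\<^sup>T *\<^sub>v x) \<bullet> (Sx *\<^sub>v (C\<^sup>T *\<^sub>v x))"
      by (rule form_transp[OF C x c2])
    also have "x \<bullet> ((Dv * Dv\<^sup>T) *\<^sub>v x) = (Dv\<^sup>T *\<^sub>v x) \<bullet> (Dv\<^sup>T *\<^sub>v x)"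
      by (rule gram_form[OF D x x])
    finally show ?thesis .
  qed
  have Q: "Bw * Bw\<^sup>T \<in> carrier_mat dx dx" using B by auto
  have Sxstep: "z \<bullet> (Sx *\<^sub>v z) = (A\<^sup>T *\<^sub>v z) \<bullet> (Sx *\<^sub>v (A\<^sup>T *\<^sub>v z)) + (Bw\<^sup>T *\<^sub>v z) \<bullet> (Bw\<^sup>T *\<^sub>v z)"
    if z: "z \<in> carrier_vec dx" for z
    using step_form[OF A S Q Sxeq z z] unfolding gram_form[OF B z z] .
  define z1 where "z1 = C\<^sup>T *\<^sub>v a"
  define z2 where "z2 = C\<^sup>T *\<^sub>v b"
  define p1 where "p1 = A\<^sup>T *\<^sub>v z1"
  define p2 where "p2 = A\<^sup>T *\<^sub>v z2"
  have z1: "z1 \<in> carrier_vec dx" and z2: "z2 \<in> carrier_vec dx" unfolding z1_def z2_def using CT ac bc by auto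
  have p1: "p1 \<in> carrier_vec dx" and p2: "p2 \<in> carrier_vec dx" unfolding p1_def p2_def using AT z1 z2 by auto
  define f where "f = (\<lambda>x y. x \<bullet> (Sx *\<^sub>v y))"
  have re': "f p1 z1 + f p2 z2 = al * s"
    using qre unfolding Kform[OF ac ac] Kform[OF bc bc] f_def p1_def p2_def z1_def z2_def .
  have im': "f p1 z2 - f p2 z1 = be * s"
    using qim unfolding Kform[OF ac bc] Kform[OF bc ac] f_def p1_def p2_def z1_def z2_def .
  have P1: "f p1 p1 \<le> f z1 z1"
    using Sxstep[OF z1] self_sp_nonneg[of "Bw\<^sup>T *\<^sub>v z1"] unfolding f_def p1_def by linarith
  have P2: "f p2 p2 \<le> f z2 z2"
    using Sxstep[OF z2] self_sp_nonneg[of "Bw\<^sup>T *\<^sub>v z2"] unfolding f_def p2_def by linarith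
  have GH: "f z1 z1 + f z2 z2 \<le> s"
    using Syform[OF ac] Syform[OF bc] self_sp_nonneg[of "Dv\<^sup>T *\<^sub>v a"] self_sp_nonneg[of "Dv\<^sup>T *\<^sub>v b"]
    unfolding s_def f_def z1_def z2_def by linarith
  have z12: "f z2 z1 = f z1 z2" unfolding f_def by (rule form_sym[OF S Sxsym z2 z1])
  define r1 where "r1 = p1 + (- al) \<cdot>\<^sub>v z1 + (- be) \<cdot>\<^sub>v z2"
  define r2 where "r2 = p2 + be \<cdot>\<^sub>v z1 + (- al) \<cdot>\<^sub>v z2"
  have r1: "r1 \<in> carrier_vec dx" and r2: "r2 \<in> carrier_vec dx" unfolding r1_def r2_def using p1 p2 z1 z2 by auto
  have e1: "f r1 r1 = f p1 p1 + (- al)^2 * f z1 z1 + (- be)^2 * f z2 z2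
      + 2 * (- al) * f p1 z1 + 2 * (- be) * f p1 z2 + 2 * (- al) * (- be) * f z1 z2"
    unfolding f_def r1_def by (rule expand3[OF S Sxsym p1 z1 z2])
  have e2: "f r2 r2 = f p2 p2 + be^2 * f z1 z1 + (- al)^2 * f z2 z2
      + 2 * be * f p2 z1 + 2 * (- al) * f p2 z2 + 2 * be * (- al) * f z1 z2"
    unfolding f_def r2_def by (rule expand3[OF S Sxsym p2 z1 z2])
  have n1: "f r1 r1 \<ge> 0" and n2: "f r2 r2 \<ge> 0" unfolding f_def using Sxpsd r1 r2 by auto
  define L where "L = al^2 + be^2"
  have sum: "f r1 r1 + f r2 r2 = f p1 p1 + f p2 p2 + L * (f z1 z1 + f z2 z2)
       - 2 * al * (f p1 z1 + f p2 z2) - 2 * be * (f p1 z2 - f p2 z1)"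
    unfolding e1 e2 L_def by (simp add: algebra_simps power2_eq_square)
  hence "0 \<le> f p1 p1 + f p2 p2 + L * (f z1 z1 + f z2 z2) - 2 * L * s"
    using n1 n2 unfolding re' im' L_def by (simp add: algebra_simps power2_eq_square)
  moreover have "L * (f z1 z1 + f z2 z2) \<le> L * s"
    using GH unfolding L_def by (intro mult_left_mono, auto)
  ultimately have "0 \<le> s - L * s" using P1 P2 GH by linarith
  hence "0 \<le> s * (1 - L)" by (simp add: algebra_simps)
  hence L1: "L \<le> 1" using spos by (simp add: zero_le_mult_iff)
  have "cmod lam ^ 2 = L" unfolding L_def al_def be_def by (simp add: cmod_power2)
  hence "cmod lam ^ 2 \<le> 1 ^ 2" using L1 by simp
  hence "cmod lam \<le> 1" by (rule power2_le_imp_le, simp)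
  thus ?thesis unfolding rhoM[unfolded M_def] .
qed

end
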